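(* Let $w$ be a nonnegative weight function on $\mathbb R$ with finite moments and infinite support, $w_1(t)=(1+t^2)w(t)$, and let $t_1,\dots,t_n$ and $\lambda_1,\dots,\lambda_n$ be the nodes and weights of the $n$-point Gaussian quadrature rule for $w$. Set $x_j=\sqrt{t_j^2+1}$, $y_j=t_j$, and define $$\langle f,g\rangle_n=\sum_{j=1}^n\lambda_j\big[f(x_j,y_j)g(x_j,y_j)+f(-x_j,y_j)g(-x_j,y_j)\big].$$ Then the $2n$ polynomials $Y_{k,1}(x,y)=p_k(w;y)$, $0\le k\le n-1$, and $Y_{k,2}(x,y)=x\,p_{k-1}(w_1;y)$, $1\le k\le n$, are mutually orthogonal with respect to $\langle\cdot,\cdot\rangle_n$.
   Context: $p_k(v;\cdot)$ denotes an orthogonal polynomial of degree $k$ with respect to the weight $v$ (any fixed nonzero normalization). The $n$-point Gaussian quadrature rule for $v$ is the rule $\int g\,v\approx\sum_j\lambda_jg(t_j)$ with nodes the zeros of $p_n(v)$, exact for all polynomials of degree at most $2n-1$. *)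

theory Defs
  imports "HOL-Analysis.Analysis" "HOL-Computational_Algebra.Polynomial"
begin

definition weight_fm :: "(real \<Rightarrow> real) \<Rightarrow> bool" where
  "weight_fm v \<longleftrightarrow> (\<forall>t. 0 \<le> v t) \<and> (\<forall>k::nat. integrable lborel (\<lambda>t. t ^ k * v t))"

definition weight_support :: "(real \<Rightarrow> real) \<Rightarrow> real set" where
  "weight_support v = {t. \<forall>e>0. (LINT x:{t - e<..<t + e}|lborel. v x) > 0}"

definition orth_poly :: "(real \<Rightarrow> real) \<Rightarrow> nat \<Rightarrow> real poly \<Rightarrow> bool" where
  "orth_poly v k p \<longleftrightarrow> p \<noteq> 0 \<and> degree p = k \<and>
     (\<forall>q. degree q < k \<longrightarrow> (LINT t|lborel. poly p t * poly q t * v t) = 0)"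

definition gauss_rule ::
  "(real \<Rightarrow> real) \<Rightarrow> nat \<Rightarrow> real poly \<Rightarrow> (nat \<Rightarrow> real) \<Rightarrow> (nat \<Rightarrow> real) \<Rightarrow> bool" where
  "gauss_rule v n pn t lam \<longleftrightarrow> inj_on t {..<n} \<and> t ` {..<n} = {x. poly pn x = 0} \<and>
     (\<forall>q. degree q < 2 * n \<longrightarrow> (LINT x|lborel. poly q x * v x) = (\<Sum>j<n. lam j * poly q (t j)))"

definition disc_ip ::
  "nat \<Rightarrow> (nat \<Rightarrow> real) \<Rightarrow> (nat \<Rightarrow> real) \<Rightarrow> (real \<Rightarrow> real \<Rightarrow> real) \<Rightarrow> (real \<Rightarrow> real \<Rightarrow> real) \<Rightarrow> real" where
  "disc_ip n t lam f g = (\<Sum>j<n. lam j *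
      (f (sqrt (t j ^ 2 + 1)) (t j) * g (sqrt (t j ^ 2 + 1)) (t j)
       + f (- sqrt (t j ^ 2 + 1)) (t j) * g (- sqrt (t j ^ 2 + 1)) (t j)))"

end

theory Submission
  imports Defs
begin

lemma gauss_apply:
  assumes "gauss_rule v n pn t lam" "degree q < 2 * n"
  shows "(\<Sum>j<n. lam j * poly q (t j)) = (LINT x|lborel. poly q x * v x)"
  using assms unfolding gauss_rule_def by auto

lemma part1:
  assumes g: "gauss_rule w n (P n) t lam"
    and o: "orth_poly w l (P l)" and dk: "degree (P k) < l" and dl: "degree (P k) + degree (P l) < 2*n"
  shows "disc_ip n t lam (\<lambda>x y. poly (P k) y) (\<lambda>x y. poly (P l) y) = 0"
proof -
  have "disc_ip n t lam (\<lambda>x y. poly (P k) y) (\<lambda>x y. poly (P l) y)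
      = 2 * (\<Sum>j<n. lam j * poly (P l * P k) (t j))"
    unfolding disc_ip_def by (simp add: sum_distrib_left algebra_simps)
  also have "(\<Sum>j<n. lam j * poly (P l * P k) (t j)) = (LINT x|lborel. poly (P l * P k) x * w x)"
    apply (rule gauss_apply[OF g])
    using degree_mult_le[of "P l" "P k"] dl by linarith
  also have "\<dots> = (LINT x|lborel. poly (P l) x * poly (P k) x * w x)" by simp
  also have "\<dots> = 0" using o dk unfolding orth_poly_def by blast
  finally show ?thesis by simp
qed

lemma part2:
  assumes g: "gauss_rule w n (P n) t lam"
    and o: "orth_poly (\<lambda>s. (1 + s\<^sup>2) * w s) b (Q b)" and dk: "degree (Q a) < b"
    and dl: "degree (Q a) + degree (Q b) + 2 < 2*n"
  shows "disc_ip n t lam (\<lambda>x y. x * poly (Q a) y) (\<lambda>x y. x * poly (Q b) y) = 0"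
proof -
  have sq: "\<And>s::real. sqrt (s^2+1) * sqrt (s^2+1) = s^2 + 1"
    by (simp add: add_nonneg_nonneg)
  have "disc_ip n t lam (\<lambda>x y. x * poly (Q a) y) (\<lambda>x y. x * poly (Q b) y)
      = 2 * (\<Sum>j<n. lam j * poly (Q b * Q a * [:1,0,1:]) (t j))"
    unfolding disc_ip_def sum_distrib_left
    apply (rule sum.cong, simp)
    subgoal for j using sq[of "t j"]
      by (simp add: algebra_simps power2_eq_square)
    done
  also have "(\<Sum>j<n. lam j * poly (Q b * Q a * [:1,0,1:]) (t j))
      = (LINT x|lborel. poly (Q b * Q a * [:1,0,1:]) x * w x)"
    apply (rule gauss_apply[OF g])
    using degree_mult_le[of "Q b * Q a" "[:1,0,1:]"] degree_mult_le[of "Q b" "Q a"] dl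
    by (simp add: degree_pCons_eq_if)
  also have "\<dots> = (LINT x|lborel. poly (Q b) x * poly (Q a) x * ((1 + x\<^sup>2) * w x))"
    by (simp add: algebra_simps power2_eq_square)
  also have "\<dots> = 0" using o dk unfolding orth_poly_def by blast
  finally show ?thesis by simp
qed

theorem corollary8p12:
  fixes w :: "real \<Rightarrow> real" and n :: nat
    and P Q :: "nat \<Rightarrow> real poly" and t lam :: "nat \<Rightarrow> real"
  assumes "weight_fm w"
    and "infinite (weight_support w)"
    and "\<And>k. k \<le> n \<Longrightarrow> orth_poly w k (P k)"
    and "\<And>k. k < n \<Longrightarrow> orth_poly (\<lambda>s. (1 + s\<^sup>2) * w s) k (Q k)"
    and "gauss_rule w n (P n) t lam"
  shows "(\<forall>k<n. \<forall>l<n. k \<noteq> l \<longrightarrow>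
            disc_ip n t lam (\<lambda>x y. poly (P k) y) (\<lambda>x y. poly (P l) y) = 0)
       \<and> (\<forall>k\<in>{1..n}. \<forall>l\<in>{1..n}. k \<noteq> l \<longrightarrow>
            disc_ip n t lam (\<lambda>x y. x * poly (Q (k - 1)) y) (\<lambda>x y. x * poly (Q (l - 1)) y) = 0)
       \<and> (\<forall>k<n. \<forall>l\<in>{1..n}.
            disc_ip n t lam (\<lambda>x y. poly (P k) y) (\<lambda>x y. x * poly (Q (l - 1)) y) = 0)"
proof (intro conjI ballI allI impI)
  have dP: "\<And>k. k \<le> n \<Longrightarrow> degree (P k) = k" using assms(3) unfolding orth_poly_def by blast
  have dQ: "\<And>k. k < n \<Longrightarrow> degree (Q k) = k" using assms(4) unfolding orth_poly_def by blast
  have sym1: "disc_ip n t lam f g = disc_ip n t lam g f" for f g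
    unfolding disc_ip_def by (simp add: algebra_simps)
  show "disc_ip n t lam (\<lambda>x y. poly (P k) y) (\<lambda>x y. poly (P l) y) = 0"
    if "k < n" "l < n" "k \<noteq> l" for k l
  proof (cases "k < l")
    case True thus ?thesis using that by (intro part1[where P=P, OF assms(5) assms(3)]) (auto simp: dP)
  next
    case False
    hence "disc_ip n t lam (\<lambda>x y. poly (P l) y) (\<lambda>x y. poly (P k) y) = 0"
      using that by (intro part1[where P=P, OF assms(5) assms(3)]) (auto simp: dP)
    thus ?thesis using sym1 by metis
  qed
  show "disc_ip n t lam (\<lambda>x y. x * poly (Q (k - 1)) y) (\<lambda>x y. x * poly (Q (l - 1)) y) = 0"
    if "k \<in> {1..n}" "l \<in> {1..n}" "k \<noteq> l" for k l
  proof (cases "k < l")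
    case True thus ?thesis using that by (intro part2[where P=P and Q=Q, OF assms(5) assms(4)]) (auto simp: dQ)
  next
    case False
    hence "disc_ip n t lam (\<lambda>x y. x * poly (Q (l - 1)) y) (\<lambda>x y. x * poly (Q (k - 1)) y) = 0"
      using that by (intro part2[where P=P and Q=Q, OF assms(5) assms(4)]) (auto simp: dQ)
    thus ?thesis using sym1 by metis
  qed
  show "disc_ip n t lam (\<lambda>x y. poly (P k) y) (\<lambda>x y. x * poly (Q (l - 1)) y) = 0" for k l
    unfolding disc_ip_def by (simp add: algebra_simps)
qed

end
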